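(* Let $N>0$. For every $\tau\in(0,1)$: (i) $0<\beta_1^*(\tau)\le\overline\beta_1(\tau)$, with equality if and only if $\tau=\tau_0^{(2)}$; (ii) $0<\beta_2^*(\tau)\le\overline\beta_2(\tau)$, with equality if and only if $\tau=\tau_0^{(1)}$.
   Context: With $D=(N+1)^2+2\tau(N+1)+1$: $$\overline\beta_1(\tau)=\tfrac{2}{1-\tau^2}(N+1+\tau+\sqrt D),\qquad \overline\beta_2(\tau)=\tfrac{2}{1-\tau^2}(1+\tau(N+1)+\sqrt D);$$ $$\beta_1^*(\tau)=4(N+1)+8\tau,\qquad \beta_2^*(\tau)=4+8\tau(N+1);$$ $$\tau_0^{(1)}=\frac{N+1}{1+\sqrt{1+4(N+1)^2}},\qquad \tau_0^{(2)}=\frac{1}{N+1+\sqrt{(N+1)^2+4}}.$$ *)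

theory Defs
  imports Complex_Main
begin

definition Dq :: "nat \<Rightarrow> real \<Rightarrow> real" where
  "Dq N \<tau> = (real N + 1)^2 + 2 * \<tau> * (real N + 1) + 1"

definition beta1bar :: "nat \<Rightarrow> real \<Rightarrow> real" where
  "beta1bar N \<tau> = 2 / (1 - \<tau>^2) * (real N + 1 + \<tau> + sqrt (Dq N \<tau>))"

definition beta2bar :: "nat \<Rightarrow> real \<Rightarrow> real" where
  "beta2bar N \<tau> = 2 / (1 - \<tau>^2) * (1 + \<tau> * (real N + 1) + sqrt (Dq N \<tau>))"

definition beta1star :: "nat \<Rightarrow> real \<Rightarrow> real" where
  "beta1star N \<tau> = 4 * (real N + 1) + 8 * \<tau>"

definition beta2star :: "nat \<Rightarrow> real \<Rightarrow> real" where
  "beta2star N \<tau> = 4 + 8 * \<tau> * (real N + 1)"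

definition tau0_1 :: "nat \<Rightarrow> real" where
  "tau0_1 N = (real N + 1) / (1 + sqrt (1 + 4 * (real N + 1)^2))"

definition tau0_2 :: "nat \<Rightarrow> real" where
  "tau0_2 N = 1 / (real N + 1 + sqrt ((real N + 1)^2 + 4))"

end

theory Submission
  imports Defs
begin

lemma sq_cmp:
  fixes a S q t :: real
  assumes "S \<ge> 0" "0 < t" "t < 1" "S^2 - a^2 = q^2 * (1 - t^2)"
  shows "a \<le> S \<and> (a = S \<longleftrightarrow> q = 0 \<and> a \<ge> 0)"
proof -
  have "q^2 * (1 - t^2) \<ge> 0" using assms by (simp add: power_le_one)
  hence "a^2 \<le> S^2" using assms(4) by linarith
  hence "\<bar>a\<bar> \<le> S" using assms(1) by (metis abs_le_square_iff abs_of_nonneg)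
  moreover have "a = S \<longleftrightarrow> q = 0 \<and> a \<ge> 0"
  proof
    assume "a = S"
    hence "q^2 * (1 - t^2) = 0" using assms(4) by simp
    moreover have "t^2 < 1" using assms by (simp add: power_less_one_iff)
    hence "1 - t^2 \<noteq> 0" by simp
    ultimately show "q = 0 \<and> a \<ge> 0" using \<open>a = S\<close> assms(1) by simp
  next
    assume "q = 0 \<and> a \<ge> 0"
    hence "S^2 = a^2" using assms(4) by simp
    thus "a = S" using \<open>q = 0 \<and> a \<ge> 0\<close> assms(1)
      by (metis power2_eq_iff_nonneg)
  qed
  ultimately show ?thesis by simp
qed

lemma root_char:
  fixes t M c R :: real
  assumes "0 < t" "0 < M" "R \<ge> 0" "R^2 = M^2 + 4*c^2" "0 < c"
  shows "(4*c*t^2 + 2*M*t - c = 0) \<longleftrightarrow> t = c / (M + R)"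
proof -
  define t0 where "t0 = c / (M + R)"
  have MR: "M + R > 0" using assms by simp
  have t0pos: "t0 > 0" using MR assms unfolding t0_def by simp
  have tt: "t0 * (M+R) = c" unfolding t0_def using MR by simp
  have "(4*c*t0^2 + 2*M*t0 - c) * (M+R)^2 = 4*c*(t0*(M+R))^2 + 2*M*(t0*(M+R))*(M+R) - c*(M+R)^2"
    by (simp add: algebra_simps power2_eq_square)
  also have "\<dots> = c*(4*c^2 + M^2 - R^2)" unfolding tt by (simp add: algebra_simps power2_eq_square)
  also have "\<dots> = 0" using assms(4) by simp
  finally have r0: "4*c*t0^2 + 2*M*t0 - c = 0" using MR by simp
  have "(4*c*t^2 + 2*M*t - c) - (4*c*t0^2 + 2*M*t0 - c) = (t - t0) * (4*c*(t+t0) + 2*M)"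
    by (simp add: algebra_simps power2_eq_square)
  moreover have "4*c*(t+t0) + 2*M > 0" using assms t0pos by (simp add: add_pos_pos)
  ultimately have "(4*c*t^2 + 2*M*t - c = 0) \<longleftrightarrow> t = t0" using r0
    by (metis diff_zero eq_iff_diff_eq_0 mult_eq_0_iff order_less_irrefl)
  thus ?thesis unfolding t0_def .
qed

theorem mainTheorem14:
  fixes N :: nat and \<tau> :: real
  assumes "N > 0" and "0 < \<tau>" and "\<tau> < 1"
  shows "(0 < beta1star N \<tau> \<and> beta1star N \<tau> \<le> beta1bar N \<tau>
            \<and> (beta1star N \<tau> = beta1bar N \<tau> \<longleftrightarrow> \<tau> = tau0_2 N))
       \<and> (0 < beta2star N \<tau> \<and> beta2star N \<tau> \<le> beta2bar N \<tau>
            \<and> (beta2star N \<tau> = beta2bar N \<tau> \<longleftrightarrow> \<tau> = tau0_1 N))"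
proof -
  define M where "M = real N + 1"
  define t where "t = \<tau>"
  have M: "M \<ge> 2" using assms(1) unfolding M_def by simp
  have t: "0 < t" "t < 1" using assms unfolding t_def by auto
  define S where "S = sqrt (Dq N \<tau>)"
  have Dpos: "Dq N \<tau> \<ge> 0" unfolding Dq_def using assms by (simp add: add_nonneg_nonneg)
  have S0: "S \<ge> 0" unfolding S_def using Dpos by simp
  have S2: "S^2 = M^2 + 2*t*M + 1" unfolding S_def M_def t_def using Dpos
    by (simp add: Dq_def)
  have c: "1 - t^2 > 0" using t by (simp add: power_less_one_iff)
  define A where "A = M + 3*t - 2*M*t^2 - 4*t^3"
  define q where "q = 4*t^2 + 2*M*t - 1"
  define B where "B = 1 + 3*t*M - 2*t^2 - 4*M*t^3"
  define p where "p = 4*M*t^2 + 2*t - M"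
  have eA: "S^2 - A^2 = q^2 * (1 - t^2)" unfolding S2 A_def q_def
    by (simp add: algebra_simps power2_eq_square power3_eq_cube)
  have eB: "S^2 - B^2 = p^2 * (1 - t^2)" unfolding S2 B_def p_def
    by (simp add: algebra_simps power2_eq_square power3_eq_cube)
  note hA = sq_cmp[OF S0 t eA]
  note hB = sq_cmp[OF S0 t eB]
  have b1: "beta1bar N \<tau> = 2*(M+t+S)/(1-t^2)" unfolding beta1bar_def M_def t_def S_def by simp
  have b1s: "beta1star N \<tau> = 4*M+8*t" unfolding beta1star_def M_def t_def by simp
  have b2: "beta2bar N \<tau> = 2*(1+t*M+S)/(1-t^2)" unfolding beta2bar_def M_def t_def S_def by simp
  have b2s: "beta2star N \<tau> = 4+8*t*M" unfolding beta2star_def M_def t_def by simp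
  have k1: "(4*M+8*t)*(1-t^2) = 2*(M+t) + 2*A" unfolding A_def
    by (simp add: algebra_simps power2_eq_square power3_eq_cube)
  have k2: "(4+8*t*M)*(1-t^2) = 2*(1+t*M) + 2*B" unfolding B_def
    by (simp add: algebra_simps power2_eq_square power3_eq_cube)
  have le1: "beta1star N \<tau> \<le> beta1bar N \<tau>"
    unfolding b1 b1s using c conjunct1[OF hA] k1 by (simp add: pos_le_divide_eq)
  have eq1: "beta1star N \<tau> = beta1bar N \<tau> \<longleftrightarrow> A = S"
    unfolding b1 b1s using c k1 by (simp add: eq_divide_eq)
  have le2: "beta2star N \<tau> \<le> beta2bar N \<tau>"
    unfolding b2 b2s using c conjunct1[OF hB] k2 by (simp add: pos_le_divide_eq)
  have eq2: "beta2star N \<tau> = beta2bar N \<tau> \<longleftrightarrow> B = S"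
    unfolding b2 b2s using c k2 by (simp add: eq_divide_eq)
  have qA: "q = 0 \<Longrightarrow> A \<ge> 0"
  proof -
    assume "q = 0"
    have "A = M + 2*t - t*q" unfolding A_def q_def
      by (simp add: algebra_simps power2_eq_square power3_eq_cube)
    thus ?thesis using \<open>q = 0\<close> M t by simp
  qed
  have pB: "p = 0 \<Longrightarrow> B \<ge> 0"
  proof -
    assume p0: "p = 0"
    have "B = 1 + 2*t*M - t*p" unfolding B_def p_def
      by (simp add: algebra_simps power2_eq_square power3_eq_cube)
    thus ?thesis using p0 M t by simp
  qed
  have r1: "q = 0 \<longleftrightarrow> t = tau0_2 N"
    using root_char[of t M "sqrt (M^2+4)" 1] t M unfolding q_def tau0_2_def M_def
    by simp
  have r2: "p = 0 \<longleftrightarrow> t = tau0_1 N"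
  proof -
    have R: "(sqrt (1 + 4*M^2))^2 = 1^2 + 4*M^2" by simp
    have "p = 0 \<longleftrightarrow> 4*M*t^2 + 2*1*t - M = 0" unfolding p_def by simp
    also have "\<dots> \<longleftrightarrow> t = M / (1 + sqrt (1 + 4*M^2))"
      using root_char[OF t(1) _ _ R] M by simp
    finally show ?thesis unfolding tau0_1_def M_def by simp
  qed
  have e1: "beta1star N \<tau> = beta1bar N \<tau> \<longleftrightarrow> \<tau> = tau0_2 N"
    using eq1 hA qA r1 unfolding t_def by blast
  have e2: "beta2star N \<tau> = beta2bar N \<tau> \<longleftrightarrow> \<tau> = tau0_1 N"
    using eq2 hB pB r2 unfolding t_def by blast
  have p1: "0 < beta1star N \<tau>" unfolding b1s using M t by simp
  have p2: "0 < beta2star N \<tau>" unfolding b2s using M t by (simp add: add_pos_pos)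
  show ?thesis using e1 e2 p1 p2 le1 le2 by blast
qed

end
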